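(* Greedy retrieve actions are optimal: let $s_t$ be a state in which the current color $p_t\neq 0$ and there exists a lane $i\in\{1,\dots,L\}$ whose front (rightmost) car has color $B_{t,i,W}=p_t$. Then the retrieve action $a^*=i$ is optimal in $s_t$, i.e., the maximum cumulative reward over all valid action sequences starting in $s_t$ (and leading to the terminal state where upstream sequence and buffer are empty) is attained by a sequence whose first action is $a^*$.
   Context: Paint shop problem with a multi-lane buffer: an upstream sequence of cars with colors in $\{1,\dots,C\}$ is processed in order; the buffer has $L$ lanes, each a first-in-first-out queue of capacity $W$, with $B_{t,i,j}\in\{0,\dots,C\}$ the color at position $j$ of lane $i$ at time $t$ (0 = empty, position $W$ is the front/exit of the lane, new cars enter at the rightmost empty position). $e_{t,1}$ is the color of the next upstream car (0 if the upstream sequence is empty), and $p_t\in\{0,\dots,C\}$ is the color of the last car appended to the downstream sequence (0 initially). Actions: $a\in\{1,\dots,L\}$ retrieves the front car of lane $a$ and appends it to the downstream sequence (setting $p_{t+1}=B_{t,a,W}$); $a\in\{L+1,\dots,2L\}$ stores the next upstream car in lane $a-L$ (leaving $p$ unchanged). Reward: $r(s_t,a)=1$ for a valid retrieval with $B_{t,a,W}=p_t$; $0$ for a valid retrieval with $B_{t,a,W}\neq p_t$; $0$ for a valid store; $-10$ for an invalid action (retrieving from an empty lane, storing into a full lane, or storing when the upstream sequence is empty). The cumulative reward of actions $a_1,\dots,a_n$ from state $s_0$ is $r(s_0,a_1,\dots,a_n)=\sum_{t=0}^{n-1} r(s_t,a_{t+1})$, where $s_{t+1}$ results from applying $a_{t+1}$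 in $s_t$. An action $a^*$ is optimal in $s_t$ if $\max_{a_1,\dots,a_n}r(s_t,a^*,a_1,\dots,a_n)\ge r(s_t,a',a'_1,\dots,a'_n)$ for all actions $a',a'_1,\dots,a'_n$. *)

theory Defs
  imports Main
begin

text \<open>A state consists of
  \<^item> lane i (for i in 1..L): the cars currently in lane i, listed from the FRONT
    (exit, position W) backwards; i.e. the list [B i W, B i (W-1), ...] of the
    nonzero entries of row i of the buffer matrix.  Empty positions (colour 0)
    are not listed.
  \<^item> upstream: the remaining upstream sequence (its head is e_{t,1});
  \<^item> prev: the colour p_t of the last car appended downstream (0 initially).\<close>

record pstate =
  lane :: "nat \<Rightarrow> nat list"
  upstream :: "nat list"
  prev :: nat

definition wf_state :: "nat \<Rightarrow> nat \<Rightarrow> nat \<Rightarrow> pstate \<Rightarrow> bool" where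
  "wf_state L W C s \<longleftrightarrow>
     (\<forall>i\<in>{1..L}. length (lane s i) \<le> W \<and> set (lane s i) \<subseteq> {1..C}) \<and>
     set (upstream s) \<subseteq> {1..C} \<and> prev s \<le> C"

text \<open>Actions 1..L retrieve from lane a; actions L+1..2L store into lane a-L.\<close>
definition valid_action :: "nat \<Rightarrow> nat \<Rightarrow> pstate \<Rightarrow> nat \<Rightarrow> bool" where
  "valid_action L W s a \<longleftrightarrow>
     (1 \<le> a \<and> a \<le> L \<and> lane s a \<noteq> []) \<or>
     (L < a \<and> a \<le> 2 * L \<and> upstream s \<noteq> [] \<and> length (lane s (a - L)) < W)"

definition step :: "nat \<Rightarrow> nat \<Rightarrow> pstate \<Rightarrow> nat \<Rightarrow> pstate" where
  "step L W s a =
     (if \<not> valid_action L W s a then s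
      else if a \<le> L then
        s\<lparr>lane := (lane s)(a := tl (lane s a)), prev := hd (lane s a)\<rparr>
      else
        s\<lparr>lane := (lane s)(a - L := lane s (a - L) @ [hd (upstream s)]),
          upstream := tl (upstream s)\<rparr>)"

definition reward :: "nat \<Rightarrow> nat \<Rightarrow> pstate \<Rightarrow> nat \<Rightarrow> int" where
  "reward L W s a =
     (if \<not> valid_action L W s a then -10
      else if a \<le> L \<and> hd (lane s a) = prev s then 1 else 0)"

fun run :: "nat \<Rightarrow> nat \<Rightarrow> pstate \<Rightarrow> nat list \<Rightarrow> pstate" where
  "run L W s [] = s"
| "run L W s (a # as) = run L W (step L W s a) as"

fun cum_reward :: "nat \<Rightarrow> nat \<Rightarrow> pstate \<Rightarrow> nat list \<Rightarrow> int" where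
  "cum_reward L W s [] = 0"
| "cum_reward L W s (a # as) = reward L W s a + cum_reward L W (step L W s a) as"

fun valid_seq :: "nat \<Rightarrow> nat \<Rightarrow> pstate \<Rightarrow> nat list \<Rightarrow> bool" where
  "valid_seq L W s [] = True"
| "valid_seq L W s (a # as) = (valid_action L W s a \<and> valid_seq L W (step L W s a) as)"

definition terminal :: "nat \<Rightarrow> pstate \<Rightarrow> bool" where
  "terminal L s \<longleftrightarrow> upstream s = [] \<and> (\<forall>i\<in>{1..L}. lane s i = [])"

end

theory Submission
  imports Defs
begin

definition shrink :: "nat \<Rightarrow> pstate \<Rightarrow> pstate" where
  "shrink i t = t\<lparr>lane := (lane t)(i := tl (lane t i))\<rparr>"

lemma run_append: "run L W s (xs @ ys) = run L W (run L W s xs) ys"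
  by (induction xs arbitrary: s) auto

lemma cum_append: "cum_reward L W s (xs @ ys) = cum_reward L W s xs + cum_reward L W (run L W s xs) ys"
  by (induction xs arbitrary: s) auto

lemma valid_append: "valid_seq L W s (xs @ ys) = (valid_seq L W s xs \<and> valid_seq L W (run L W s xs) ys)"
  by (induction xs arbitrary: s) auto

lemma prevA:
  "valid_seq L W (s\<lparr>prev := q\<rparr>) as = valid_seq L W s as \<and>
   lane (run L W (s\<lparr>prev := q\<rparr>) as) = lane (run L W s as) \<and>
   upstream (run L W (s\<lparr>prev := q\<rparr>) as) = upstream (run L W s as) \<and>
   cum_reward L W (s\<lparr>prev := q\<rparr>) as \<le> cum_reward L W s as + 1"
proof (induction as arbitrary: s)
  case Nil
  then show ?case by simp
next
  case (Cons a as)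
  have va: "valid_action L W (s\<lparr>prev := q\<rparr>) a = valid_action L W s a"
    by (simp add: valid_action_def)
  show ?case
  proof (cases "valid_action L W s a")
    case False
    then show ?thesis using va Cons.IH[of s] by (simp add: step_def reward_def)
  next
    case True
    show ?thesis
    proof (cases "a \<le> L")
      case True
      then have "step L W (s\<lparr>prev := q\<rparr>) a = step L W s a"
        using va \<open>valid_action L W s a\<close> by (simp add: step_def)
      then show ?thesis using va \<open>valid_action L W s a\<close> True
        by (simp add: reward_def)
    next
      case False
      then have "step L W (s\<lparr>prev := q\<rparr>) a = (step L W s a)\<lparr>prev := q\<rparr>"
        using va \<open>valid_action L W s a\<close> by (simp add: step_def)
      then show ?thesis using va \<open>valid_action L W s a\<close> False Cons.IH[of "step L W s a"]
        by (simp add: reward_def)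
    qed
  qed
qed

lemma shrinkB:
  assumes "1 \<le> i" "i \<le> L" "lane t i \<noteq> []" "i \<notin> set xs" "valid_seq L W t xs"
  shows "valid_seq L W (shrink i t) xs \<and> cum_reward L W (shrink i t) xs = cum_reward L W t xs
     \<and> lane (run L W t xs) i \<noteq> [] \<and> hd (lane (run L W t xs) i) = hd (lane t i) \<and> run L W (shrink i t) xs = shrink i (run L W t xs)"
  using assms
proof (induction xs arbitrary: t)
  case Nil
  then show ?case by simp
next
  case (Cons a xs)
  have ai: "a \<noteq> i" using Cons.prems by auto
  have v: "valid_action L W t a" using Cons.prems by simp
  have v1: "valid_action L W (shrink i t) a"
    using v ai Cons.prems(3) by (auto simp: valid_action_def shrink_def)
  have r: "reward L W (shrink i t) a = reward L W t a"
    using v v1 ai by (auto simp: reward_def shrink_def)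
  have st: "step L W (shrink i t) a = shrink i (step L W t a)"
    using v v1 ai Cons.prems(3) by (cases "lane t i") (auto simp: step_def shrink_def fun_eq_iff)
  have ne: "lane (step L W t a) i \<noteq> []"
    using v ai Cons.prems(3) by (auto simp: step_def)
  have hd: "hd (lane (step L W t a) i) = hd (lane t i)"
    using v ai Cons.prems(3) by (cases "lane t i") (auto simp: step_def)
  show ?case using Cons.IH[of "step L W t a"] Cons.prems ne st r v1 hd by simp
qed

theorem theorem2:
  fixes L W C :: nat and s :: pstate and i :: nat
  assumes "wf_state L W C s"
    and "prev s \<noteq> 0"
    and "i \<in> {1..L}"
    and "lane s i \<noteq> []"
    and "hd (lane s i) = prev s"
  shows "\<forall>as. valid_seq L W s as \<and> terminal L (run L W s as) \<longrightarrow>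
           (\<exists>bs. valid_seq L W s (i # bs) \<and> terminal L (run L W s (i # bs)) \<and>
                 cum_reward L W s (i # bs) \<ge> cum_reward L W s as)"
proof (intro allI impI)
  fix as assume H: "valid_seq L W s as \<and> terminal L (run L W s as)"
  have i1: "1 \<le> i" "i \<le> L" using assms(3) by auto
  have vi: "valid_action L W s i" using i1 assms(4) by (simp add: valid_action_def)
  have s1: "step L W s i = shrink i s"
    using vi i1 assms(5) by (simp add: step_def shrink_def)
  have ri: "reward L W s i = 1" using vi i1 assms(5) by (simp add: reward_def)
  show "\<exists>bs. valid_seq L W s (i # bs) \<and> terminal L (run L W s (i # bs)) \<and>
                 cum_reward L W s (i # bs) \<ge> cum_reward L W s as"
  proof (cases "i \<in> set as")
    case False
    then have "lane (run L W s as) i \<noteq> []" using shrinkB[OF i1 assms(4) False] H by simp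
    then show ?thesis using H assms(3) by (auto simp: terminal_def)
  next
    case True
    then obtain xs ys where as: "as = xs @ i # ys" and nx: "i \<notin> set xs"
      by (metis split_list_first)
    define t where "t = run L W s xs"
    have vx: "valid_seq L W s xs" and vt: "valid_action L W t i"
      and vy: "valid_seq L W (step L W t i) ys"
      using H as by (auto simp: valid_append t_def)
    note B = shrinkB[OF i1 assms(4) nx vx]
    have st: "step L W t i = (shrink i t)\<lparr>prev := prev s\<rparr>"
      using vt i1 B assms(5) unfolding t_def by (simp add: step_def shrink_def)
    define u where "u = shrink i t"
    have su: "run L W (step L W s i) xs = u" using B s1 by (simp add: u_def t_def)
    note A = prevA[where L=L and W=W and s=u and q="prev s" and as=ys]
    have vnew: "valid_seq L W s (i # xs @ ys)"
      using vi s1 B su A vy st by (simp add: valid_append u_def)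
    have tnew: "terminal L (run L W s (i # xs @ ys))"
      using H as A su st by (simp add: run_append terminal_def t_def u_def)
    have rt: "reward L W t i \<le> 1" by (simp add: reward_def)
    have cold: "cum_reward L W s as = cum_reward L W s xs + reward L W t i
        + cum_reward L W (u\<lparr>prev := prev s\<rparr>) ys"
      using as st by (simp add: cum_append t_def u_def)
    have cnew: "cum_reward L W s (i # xs @ ys) = 1 + cum_reward L W s xs + cum_reward L W u ys"
      using ri s1 B su by (simp add: cum_append)
    have "cum_reward L W s as \<le> cum_reward L W s (i # xs @ ys)"
    proof (cases "reward L W t i = 1")
      case True
      then have "hd (lane t i) = prev t" using vt i1 by (simp add: reward_def split: if_splits)
      then have "u\<lparr>prev := prev s\<rparr> = u" using B assms(5) by (simp add: u_def shrink_def t_def)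
      then show ?thesis using cold cnew True by simp
    next
      case False
      then show ?thesis using cold cnew rt A by simp
    qed
    then show ?thesis using vnew tnew by blast
  qed
qed

end
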